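(* For $n\ge 2$ let $X^n$ be the continuous-time Markov chain on $V_n=\{v_0,\dots,v_{2n}\}$, $A=v_0$, $B=v_n$, $C=v_{2n}$, with nonzero jump rates $q(v_i,v_{i+1})=1$ for $0\le i\le 2n-1$, $i\neq n$; $q(B,v_{n+1})=1/n$, $q(B,C)=1-1/n$; $q(v_{i+1},v_i)=2^{-n^2}$ for $0\le i\le 2n-1$; $q(C,B)=(n-1)2^{-n^3}$. Let $P^n_t$ be its semigroup and $\pi_n$ its reversible stationary distribution. Then for all $n$ sufficiently large, for all $x,y\in V_n\setminus\{C\}$ and all $t$ with $n/2\le t\le 3n$, \[ P^n_t(x,y)\ge \pi_n(y). \]
   Context: The graph underlying $X^n$ is a path $v_0\cdots v_{2n}$ plus an extra edge $B$–$C$; transitions occur only along edges with the given rates. *)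

theory Defs
  imports Complex_Main
begin

text \<open>States v_0,...,v_{2n} are encoded as naturals 0..2n; A = 0, B = n, C = 2n.\<close>

definition states :: "nat \<Rightarrow> nat set" where
  "states n = {0..2*n}"

definition rate :: "nat \<Rightarrow> nat \<Rightarrow> nat \<Rightarrow> real" where
  "rate n i j =
     (if i \<le> 2*n \<and> j \<le> 2*n \<and> i \<noteq> j then
        (if j = i + 1 \<and> i \<noteq> n then 1
         else if i = n \<and> j = n + 1 then 1 / real n
         else if i = n \<and> j = 2*n then 1 - 1 / real n
         else if i = j + 1 then inverse (2 ^ (n^2))
         else if i = 2*n \<and> j = n then (real n - 1) * inverse (2 ^ (n^3))
         else 0)
      else 0)"

definition gen :: "nat \<Rightarrow> nat \<Rightarrow> nat \<Rightarrow> real" where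
  "gen n i j = (if i = j then - (\<Sum>k\<in>states n - {i}. rate n i k) else rate n i j)"

fun gen_pow :: "nat \<Rightarrow> nat \<Rightarrow> nat \<Rightarrow> nat \<Rightarrow> real" where
  "gen_pow n 0 i j = (if i = j then 1 else 0)"
| "gen_pow n (Suc k) i j = (\<Sum>l\<in>states n. gen_pow n k i l * gen n l j)"

definition trans_semigroup :: "nat \<Rightarrow> real \<Rightarrow> nat \<Rightarrow> nat \<Rightarrow> real" where
  "trans_semigroup n t i j = (\<Sum>k. t ^ k / fact k * gen_pow n k i j)"

definition stat_dist :: "nat \<Rightarrow> nat \<Rightarrow> real" where
  "stat_dist n = (THE p. (\<forall>i. i \<notin> states n \<longrightarrow> p i = 0)
                      \<and> (\<forall>i\<in>states n. p i \<ge> 0)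
                      \<and> (\<Sum>i\<in>states n. p i) = 1
                      \<and> (\<forall>j\<in>states n. (\<Sum>i\<in>states n. p i * gen n i j) = 0)
                      \<and> (\<forall>i\<in>states n. \<forall>j\<in>states n. p i * rate n i j = p j * rate n j i))"

end

theory Submission
  imports Defs
begin

lemma rate_cases: "rate n i j = 0 \<or> rate n i j = 1 \<or> rate n i j = 1/real n \<or> rate n i j = 1 - 1/real n
   \<or> rate n i j = inverse (2^(n^2)) \<or> rate n i j = (real n - 1) * inverse (2^(n^3))"
  unfolding rate_def by (simp split: if_split)

lemma eps_le1: "inverse ((2::real) ^ k) \<le> 1"
  by (simp add: inverse_le_1_iff)

lemma eps_pos: "inverse ((2::real) ^ k) > 0"
  by simp

lemma n_le_pow: "real n \<le> 2 ^ (n^3)"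
proof -
  have "n < 2 ^ n" by (rule less_exp)
  also have "(2::nat)^n \<le> 2^(n^3)"
    by (rule power_increasing) (cases n, auto simp: power3_eq_cube)
  finally have "n \<le> (2::nat)^(n^3)" by simp
  then have "real n \<le> real ((2::nat)^(n^3))" by (simp only: of_nat_le_iff)
  then show ?thesis by simp
qed

lemma rate_nonneg: "n \<ge> 2 \<Longrightarrow> rate n i j \<ge> 0"
proof -
  assume n: "n \<ge> 2"
  have h1: "1 / real n \<le> 1" using n by simp
  have h2: "real n \<ge> 1" using n by simp
  have h3: "(real n - 1) * inverse (2^(n^3)) \<ge> 0" using h2 by simp
  show ?thesis using rate_cases[of n i j] h1 h2 h3 eps_pos[of "n^2"] by auto
qed

lemma rate_le1: "n \<ge> 2 \<Longrightarrow> rate n i j \<le> 1"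
proof -
  assume n: "n \<ge> 2"
  have b: "(real n - 1) * inverse (2 ^ (n^3)) \<le> 1"
  proof -
    have p: "(0::real) < 2^(n^3)" by simp
    have "real n - 1 \<le> 2^(n^3)" using n_le_pow[of n] by linarith
    then show ?thesis using p by (simp add: divide_le_eq_1 flip: divide_inverse)
  qed
  have h1: "1 / real n \<le> 1" using n by simp
  have h2: "real n \<ge> 1" using n by simp
  show ?thesis using rate_cases[of n i j] b h1 h2 eps_le1[of "n^2"] by auto
qed

lemma rate_out1: "j \<notin> states n \<Longrightarrow> rate n i j = 0"
  and rate_out2: "i \<notin> states n \<Longrightarrow> rate n i j = 0"
  unfolding rate_def states_def by auto

lemma rate_fwd: "i < 2*n \<Longrightarrow> rate n i (Suc i) = (if i = n then 1/real n else 1)"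
  unfolding rate_def by auto

lemma rate_bwd: "i < 2*n \<Longrightarrow> n \<ge> 2 \<Longrightarrow> rate n (Suc i) i = inverse (2^(n^2))"
  unfolding rate_def by auto

lemma rate_n2n: "n \<ge> 2 \<Longrightarrow> rate n n (2*n) = 1 - 1/real n"
  unfolding rate_def by auto

lemma rate_2nn: "n \<ge> 2 \<Longrightarrow> rate n (2*n) n = (real n - 1) * inverse (2^(n^3))"
  unfolding rate_def by auto

lemma rate_other: "\<not>(j = Suc i) \<Longrightarrow> \<not>(i = Suc j) \<Longrightarrow> \<not>(i = n \<and> j = 2*n) \<Longrightarrow> \<not>(i = 2*n \<and> j = n)
   \<Longrightarrow> rate n i j = 0"
  unfolding rate_def by auto

lemma rate_bound: "n \<ge> 2 \<Longrightarrow> rate n l k \<le> (if k = Suc l then (if l = n then 1/real n else 1) else 0)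
   + (if Suc k = l then inverse(2^(n^2)) else 0) + (if l = n \<and> k = 2*n then 1 - 1/real n else 0)
   + (if l = 2*n \<and> k = n then (real n - 1) * inverse (2^(n^3)) else 0)"
proof -
  assume n: "n \<ge> 2"
  have h1: "1 / real n \<le> 1" using n by simp
  have h2: "real n \<ge> 1" using n by simp
  have h3: "(real n - 1) * inverse (2^(n^3)) \<ge> 0" using h2 by simp
  have h4: "0 \<le> 1 - 1/real n" using h1 by simp
  have h5: "0 \<le> 1/real n" by simp
  have e: "0 \<le> inverse ((2::real)^(n^2))" by simp
  show ?thesis
  proof (cases "k = Suc l")
    case True
    then show ?thesis using rate_fwd[of l n] rate_out1[of k n l] n h3 h4 e h5
      by (cases "l < 2*n") (auto simp: states_def)
  next
    case F1: False
    show ?thesis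
    proof (cases "Suc k = l")
      case True
      then show ?thesis using rate_bwd[of k n] rate_out2[of l n k] n h3 h4 e F1
        by (cases "k < 2*n") (auto simp: states_def)
    next
      case F2: False
      show ?thesis
      proof (cases "l = n \<and> k = 2*n")
        case True
        then show ?thesis using rate_n2n[OF n] n h3 F1 F2 by auto
      next
        case F3: False
        show ?thesis
        proof (cases "l = 2*n \<and> k = n")
          case True
          then show ?thesis using rate_2nn[OF n] n h4 F1 F2 F3 by auto
        next
          case False
          then show ?thesis using rate_other[of k l n] F1 F2 F3 h3 h4 e by auto
        qed
      qed
    qed
  qed
qed

lemma sum_if_unique:
  fixes c :: real
  assumes "finite S" "c \<ge> 0" "\<And>k k'. P k \<Longrightarrow> P k' \<Longrightarrow> k = k'"
  shows "(\<Sum>k\<in>S. if P k then c else 0) \<le> (if \<exists>k\<in>S. P k then c else 0)"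
proof (cases "\<exists>k\<in>S. P k")
  case True
  then obtain k0 where k0: "k0 \<in> S" "P k0" by blast
  have "(\<Sum>k\<in>S. if P k then c else 0) = (\<Sum>k\<in>S. if k = k0 then c else 0)"
    using assms(3) k0 by (intro sum.cong) auto
  also have "\<dots> = c" using k0 assms(1) by simp
  finally show ?thesis using True by simp
next
  case False
  then have "(\<Sum>k\<in>S. if P k then c else 0) = 0" by (intro sum.neutral) auto
  then show ?thesis using False by simp
qed

definition exitr :: "nat \<Rightarrow> nat \<Rightarrow> real" where
  "exitr n i = (\<Sum>k\<in>states n - {i}. rate n i k)"

lemma exitr_nonneg: "n \<ge> 2 \<Longrightarrow> exitr n i \<ge> 0"
  unfolding exitr_def by (intro sum_nonneg rate_nonneg)

lemma eps_le_half: "n \<ge> 1 \<Longrightarrow> inverse ((2::real) ^ (n^2)) \<le> 1/2"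
proof -
  assume n: "n \<ge> 1"
  have "(2::real) ^ 1 \<le> 2 ^ (n^2)" by (rule power_increasing) (use n in \<open>auto simp: power2_eq_square\<close>)
  then have "inverse ((2::real) ^ (n^2)) \<le> inverse 2" by (intro le_imp_inverse_le) auto
  then show ?thesis by simp
qed

lemma eps3_le1: "n \<ge> 2 \<Longrightarrow> (real n - 1) * inverse ((2::real) ^ (n^3)) \<le> 1"
proof -
  assume n: "n \<ge> 2"
  have p: "(0::real) < 2^(n^3)" by simp
  have "real n - 1 \<le> 2^(n^3)" using n_le_pow[of n] by linarith
  then show ?thesis using p by (simp add: divide_le_eq_1 flip: divide_inverse)
qed

lemma exitr_le: "n \<ge> 2 \<Longrightarrow> i \<in> states n \<Longrightarrow> exitr n i \<le> (if i < 2*n then 3/2 else 2)"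
proof -
  assume n: "n \<ge> 2" and i: "i \<in> states n"
  define c1 where "c1 = (if i = n then 1/real n else 1)"
  define e where "e = inverse ((2::real)^(n^2))"
  define e3 where "e3 = (real n - 1) * inverse ((2::real)^(n^3))"
  have h1: "1 / real n \<le> 1" using n by simp
  have c1: "0 \<le> c1" "c1 \<le> 1" using h1 unfolding c1_def by auto
  have e: "0 \<le> e" "e \<le> 1/2" unfolding e_def using eps_le_half[of n] n by auto
  have e3: "0 \<le> e3" "e3 \<le> 1" unfolding e3_def using eps3_le1[OF n] n by auto
  have h4: "0 \<le> 1 - 1/real n" using h1 by simp
  have fin: "finite (states n)" unfolding states_def by simp
  let ?f = "\<lambda>k. (if k = Suc i then c1 else 0) + (if Suc k = i then e else 0)
     + (if i = n \<and> k = 2*n then 1 - 1/real n else 0) + (if i = 2*n \<and> k = n then e3 else 0)"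
  have "exitr n i \<le> (\<Sum>k\<in>states n - {i}. ?f k)"
    unfolding exitr_def c1_def e_def e3_def by (intro sum_mono rate_bound n)
  also have "\<dots> \<le> (\<Sum>k\<in>states n. ?f k)"
    by (rule sum_mono2) (use fin c1 e e3 h4 in auto)
  also have "\<dots> = (\<Sum>k\<in>states n. if k = Suc i then c1 else 0) + (\<Sum>k\<in>states n. if Suc k = i then e else 0)
     + (\<Sum>k\<in>states n. if i = n \<and> k = 2*n then 1 - 1/real n else 0) + (\<Sum>k\<in>states n. if i = 2*n \<and> k = n then e3 else 0)"
    by (simp add: sum.distrib)
  also have "\<dots> \<le> (if \<exists>k\<in>states n. k = Suc i then c1 else 0) + (if \<exists>k\<in>states n. Suc k = i then e else 0)
     + (if \<exists>k\<in>states n. i = n \<and> k = 2*n then 1 - 1/real n else 0) + (if \<exists>k\<in>states n. i = 2*n \<and> k = n then e3 else 0)"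
    by (intro add_mono sum_if_unique fin c1 e e3 h4) auto
  also have "\<dots> \<le> (if i < 2*n then 3/2 else 2)"
    using c1 e e3 h4 i n unfolding states_def c1_def by (auto split: if_splits)
  finally show ?thesis .
qed

definition Mm :: "nat \<Rightarrow> nat \<Rightarrow> nat \<Rightarrow> real" where
  "Mm n i j = gen n i j + (if i = j then 2 else 0)"

fun Mpow :: "nat \<Rightarrow> nat \<Rightarrow> nat \<Rightarrow> nat \<Rightarrow> real" where
  "Mpow n 0 i j = (if i = j then 1 else 0)"
| "Mpow n (Suc k) i j = (\<Sum>l\<in>states n. Mpow n k i l * Mm n l j)"

lemma Mm_diag: "Mm n i i = 2 - exitr n i"
  unfolding Mm_def gen_def exitr_def by simp

lemma Mm_off: "i \<noteq> j \<Longrightarrow> Mm n i j = rate n i j"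
  unfolding Mm_def gen_def by simp

lemma Mm_nonneg: "n \<ge> 2 \<Longrightarrow> i \<in> states n \<Longrightarrow> Mm n i j \<ge> 0"
  using exitr_le[of n i] Mm_diag[of n i] Mm_off[of i j n] rate_nonneg[of n i j]
  by (cases "i = j") (auto split: if_splits)

lemma Mm_le2: "n \<ge> 2 \<Longrightarrow> Mm n i j \<le> 2"
  using exitr_nonneg[of n i] Mm_diag[of n i] Mm_off[of i j n] rate_le1[of n i j]
  by (cases "i = j") auto

lemma Mm_loop: "n \<ge> 2 \<Longrightarrow> i < 2*n \<Longrightarrow> Mm n i i \<ge> 1/2"
  using exitr_le[of n i] Mm_diag[of n i] by (auto simp: states_def)

lemma Mm_fwd: "i < 2*n \<Longrightarrow> Mm n i (Suc i) = (if i = n then 1/real n else 1)"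
  using Mm_off[of i "Suc i" n] rate_fwd[of i n] by simp

lemma Mm_bwd: "i < 2*n \<Longrightarrow> n \<ge> 2 \<Longrightarrow> Mm n (Suc i) i = inverse (2^(n^2))"
  using Mm_off[of "Suc i" i n] rate_bwd[of i n] by simp

lemma Mpow_nonneg: "n \<ge> 2 \<Longrightarrow> Mpow n k i j \<ge> 0"
  by (induction k arbitrary: j) (auto intro!: sum_nonneg mult_nonneg_nonneg Mm_nonneg)

lemma Mpow_le: "n \<ge> 2 \<Longrightarrow> Mpow n k i j \<le> (2 * (2*real n+1))^k"
proof (induction k arbitrary: j)
  case 0
  then show ?case by simp
next
  case (Suc k)
  have "Mpow n (Suc k) i j \<le> (\<Sum>l\<in>states n. (2 * (2*real n+1))^k * 2)"
    unfolding Mpow.simps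
    by (intro sum_mono mult_mono Suc Mm_le2 Mpow_nonneg) (auto intro: Mm_nonneg[OF Suc.prems])
  also have "\<dots> = (2 * (2*real n+1))^(Suc k)" by (simp add: states_def)
  finally show ?case .
qed

lemma Mpow_step: "n \<ge> 2 \<Longrightarrow> l \<in> states n \<Longrightarrow> Mpow n k i l * Mm n l j \<le> Mpow n (Suc k) i j"
  unfolding Mpow.simps
  by (rule member_le_sum) (auto intro!: mult_nonneg_nonneg Mpow_nonneg Mm_nonneg simp: states_def)

lemma Mpow_fwd: "n \<ge> 2 \<Longrightarrow> x + d \<le> 2*n \<Longrightarrow> Mpow n d x (x+d) \<ge> (if x \<le> n \<and> n < x+d then 1/real n else 1)"
proof (induction d)
  case 0
  then show ?case by simp
next
  case (Suc d)
  have n: "n \<ge> 2" by fact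
  have lt: "x + d < 2*n" using Suc.prems by simp
  have IH: "Mpow n d x (x+d) \<ge> (if x \<le> n \<and> n < x+d then 1/real n else 1)" using Suc lt by simp
  have st: "Mpow n d x (x+d) * Mm n (x+d) (Suc (x+d)) \<le> Mpow n (Suc d) x (Suc (x+d))"
    by (rule Mpow_step) (use n lt in \<open>auto simp: states_def\<close>)
  have m: "Mm n (x+d) (Suc (x+d)) = (if x+d = n then 1/real n else 1)" using Mm_fwd[OF lt] .
  show ?case
  proof (cases "x + d = n")
    case True
    then have "Mpow n d x (x+d) \<ge> 1" using IH by simp
    then have "Mpow n d x (x+d) * (1/real n) \<ge> 1 * (1/real n)"
      by (intro mult_right_mono) auto
    then show ?thesis using st m True by simp
  next
    case False
    then show ?thesis using st m IH by (auto split: if_splits)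
  qed
qed

lemma Mpow_bwd: "n \<ge> 2 \<Longrightarrow> y + d \<le> 2*n \<Longrightarrow> Mpow n d (y+d) y \<ge> inverse (2^(n^2)) ^ d"
proof (induction d arbitrary: y)
  case 0
  then show ?case by simp
next
  case (Suc d)
  have n: "n \<ge> 2" by fact
  have lt: "y < 2*n" using Suc.prems by simp
  have IH: "Mpow n d (Suc y + d) (Suc y) \<ge> inverse (2^(n^2)) ^ d" using Suc.IH[of "Suc y"] Suc.prems by simp
  have st: "Mpow n d (Suc y + d) (Suc y) * Mm n (Suc y) y \<le> Mpow n (Suc d) (Suc y + d) y"
    by (rule Mpow_step) (use n lt in \<open>auto simp: states_def\<close>)
  have "inverse (2^(n^2)) ^ d * inverse (2^(n^2)) \<le> Mpow n d (Suc y + d) (Suc y) * inverse (2^(n^2))"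
    by (rule mult_right_mono[OF IH]) simp
  then have "inverse (2^(n^2)) ^ d * inverse (2^(n^2)) \<le> Mpow n d (Suc y + d) (Suc y) * Mm n (Suc y) y"
    using Mm_bwd[OF lt n] by simp
  then show ?case using st by (simp add: mult.commute)
qed

lemma Mpow_loop: "n \<ge> 2 \<Longrightarrow> y < 2*n \<Longrightarrow> Mpow n (k+m) x y \<ge> Mpow n k x y * (1/2)^m"
proof (induction m)
  case 0
  then show ?case by simp
next
  case (Suc m)
  have st: "Mpow n (k+m) x y * Mm n y y \<le> Mpow n (Suc (k+m)) x y"
    by (rule Mpow_step) (use Suc.prems in \<open>auto simp: states_def\<close>)
  have "Mpow n k x y * (1/2)^m * (1/2) \<le> Mpow n (k+m) x y * Mm n y y"
    using Suc Mm_loop[of n y] by (intro mult_mono) (auto intro: Mpow_nonneg)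
  then show ?case using st by simp
qed

lemma Mpow_path: "n \<ge> 2 \<Longrightarrow> x < 2*n \<Longrightarrow> y < 2*n \<Longrightarrow>
   Mpow n (2*n) x y \<ge> (1/real n) * (1/4)^n * inverse (2^(n^2)) ^ (2*n-1-y)"
proof -
  assume n: "n \<ge> 2" and x: "x < 2*n" and y: "y < 2*n"
  define e where "e = inverse ((2::real)^(n^2))"
  have e: "0 \<le> e" "e \<le> 1" unfolding e_def by (auto simp: eps_le1)
  have q: "(1/2::real)^(2*n) = (1/4)^n"
  proof -
    have "(1/2::real)^(2*n) = ((1/2)^2)^n" by (simp only: power_mult)
    also have "\<dots> = (1/4)^n" by (simp add: power2_eq_square)
    finally show ?thesis .
  qed
  have hn: "1/real n \<le> 1" "0 \<le> 1/real n" using n by auto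
  show ?thesis
  proof (cases "x \<le> y")
    case True
    define d where "d = y - x"
    have "Mpow n d x (x+d) \<ge> (if x \<le> n \<and> n < x+d then 1/real n else 1)"
      by (rule Mpow_fwd) (use n y True in \<open>auto simp: d_def\<close>)
    then have f: "Mpow n d x y \<ge> 1/real n" using True hn unfolding d_def by (auto split: if_splits)
    have l1: "Mpow n (d + (2*n - d)) x y \<ge> Mpow n d x y * (1/2)^(2*n-d)"
      by (rule Mpow_loop) (use n y in auto)
    have l2: "d + (2*n-d) = 2*n" unfolding d_def using y by simp
    have l3: "(1/2::real)^(2*n-d) \<ge> (1/2)^(2*n)" by (rule power_decreasing) auto
    have l4: "(1/real n) * (1/2)^(2*n) \<le> Mpow n d x y * (1/2)^(2*n-d)"
      by (rule mult_mono) (use f l3 hn n in \<open>auto intro: Mpow_nonneg\<close>)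
    have l5: "Mpow n (2*n) x y \<ge> (1/real n) * (1/4)^n" using l1 l2 l4 q by simp
    have l6: "e ^ (2*n-1-y) \<le> 1" using e by (simp add: power_le_one)
    have "(1/real n) * (1/4)^n * e ^ (2*n-1-y) \<le> (1/real n) * (1/4)^n"
      by (rule mult_right_le_one_le) (use l6 e hn in auto)
    then show ?thesis using l5 unfolding e_def[symmetric] by linarith
  next
    case False
    define d where "d = x - y"
    have "Mpow n d (y+d) y \<ge> e ^ d"
      unfolding e_def by (rule Mpow_bwd) (use n x False in \<open>auto simp: d_def\<close>)
    then have f: "Mpow n d x y \<ge> e ^ d" using False unfolding d_def by simp
    have "e ^ d \<ge> e ^ (2*n-1-y)" by (rule power_decreasing) (use e x in \<open>auto simp: d_def\<close>)
    then have f2: "Mpow n d x y \<ge> e ^ (2*n-1-y)" using f by simp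
    have "Mpow n (d + (2*n - d)) x y \<ge> Mpow n d x y * (1/2)^(2*n-d)"
      by (rule Mpow_loop) (use n y in auto)
    moreover have "d + (2*n-d) = 2*n" unfolding d_def using x by simp
    moreover have "(1/2::real)^(2*n-d) \<ge> (1/2)^(2*n)" by (rule power_decreasing) auto
    ultimately have "Mpow n (2*n) x y \<ge> e ^ (2*n-1-y) * (1/2)^(2*n)"
    proof -
      assume l1: "Mpow n (d + (2*n - d)) x y \<ge> Mpow n d x y * (1/2)^(2*n-d)"
        and l2: "d + (2*n-d) = 2*n" and l3: "(1/2::real)^(2*n-d) \<ge> (1/2)^(2*n)"
      have "e ^ (2*n-1-y) * (1/2)^(2*n) \<le> Mpow n d x y * (1/2)^(2*n-d)"
        by (rule mult_mono) (use f2 l3 e n in \<open>auto intro: Mpow_nonneg\<close>)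
      then show ?thesis using l1 l2 by simp
    qed
    then have P: "Mpow n (2*n) x y \<ge> (1/4)^n * e ^ (2*n-1-y)" using q by (simp add: mult.commute)
    have Z: "(1/real n) * ((1/4)^n * e^(2*n-1-y)) \<le> (1/4)^n * e^(2*n-1-y)"
      by (rule mult_left_le_one_le) (use hn e in auto)
    show ?thesis unfolding e_def[symmetric] mult.assoc using Z P by linarith
  qed
qed

lemma pascal:
  fixes X :: "nat \<Rightarrow> real" and a :: real
  shows "(\<Sum>m\<le>Suc k. of_nat (Suc k choose m) * a^(Suc k - m) * X m)
    = (\<Sum>m\<le>k. of_nat (k choose m) * a^(k-m) * X (Suc m)) + a * (\<Sum>m\<le>k. of_nat (k choose m) * a^(k-m) * X m)"
proof -
  have L: "(\<Sum>m\<le>Suc k. of_nat (Suc k choose m) * a^(Suc k - m) * X m)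
     = a^(Suc k) * X 0 + (\<Sum>m\<le>k. of_nat (Suc k choose Suc m) * a^(k-m) * X (Suc m))"
    unfolding sum.atMost_Suc_shift by simp
  have L2: "(\<Sum>m\<le>k. of_nat (Suc k choose Suc m) * a^(k-m) * X (Suc m))
     = (\<Sum>m\<le>k. of_nat (k choose m) * a^(k-m) * X (Suc m)) + (\<Sum>m\<le>k. of_nat (k choose Suc m) * a^(k-m) * X (Suc m))"
    by (simp add: sum.distrib[symmetric] algebra_simps)
  have R1: "a * (\<Sum>m\<le>k. of_nat (k choose m) * a^(k-m) * X m) = (\<Sum>m\<le>k. of_nat (k choose m) * a^(Suc k-m) * X m)"
    unfolding sum_distrib_left by (intro sum.cong refl) (simp add: Suc_diff_le algebra_simps)
  also have "\<dots> = (\<Sum>m\<le>Suc k. of_nat (k choose m) * a^(Suc k-m) * X m)"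
    by simp
  also have "\<dots> = a^(Suc k) * X 0 + (\<Sum>m\<le>k. of_nat (k choose Suc m) * a^(k-m) * X (Suc m))"
    unfolding sum.atMost_Suc_shift by simp
  finally show ?thesis using L L2 by simp
qed

lemma gen_pow_binom: "j \<in> states n \<Longrightarrow>
   gen_pow n k i j = (\<Sum>m\<le>k. of_nat (k choose m) * (-2)^(k-m) * Mpow n m i j)"
proof (induction k arbitrary: j)
  case 0
  then show ?case by simp
next
  case (Suc k)
  have fin: "finite (states n)" by (simp add: states_def)
  have "gen_pow n (Suc k) i j = (\<Sum>l\<in>states n. gen_pow n k i l * (Mm n l j - (if l = j then 2 else 0)))"
    by (simp add: Mm_def)
  also have "\<dots> = (\<Sum>l\<in>states n. gen_pow n k i l * Mm n l j) - (\<Sum>l\<in>states n. gen_pow n k i l * (if l = j then 2 else 0))"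
    by (simp only: right_diff_distrib sum_subtractf)
  also have "(\<Sum>l\<in>states n. gen_pow n k i l * (if l = j then 2 else 0)) = 2 * gen_pow n k i j"
  proof -
    have "(\<Sum>l\<in>states n. gen_pow n k i l * (if l = j then 2 else 0)) = (\<Sum>l\<in>states n. if l = j then gen_pow n k i l * 2 else 0)"
      by (intro sum.cong refl) simp
    also have "\<dots> = gen_pow n k i j * 2" using Suc.prems fin by simp
    finally show ?thesis by simp
  qed
  also have "(\<Sum>l\<in>states n. gen_pow n k i l * Mm n l j)
     = (\<Sum>l\<in>states n. (\<Sum>m\<le>k. of_nat (k choose m) * (-2)^(k-m) * Mpow n m i l) * Mm n l j)"
    using Suc.IH by (intro sum.cong refl) simp
  also have "\<dots> = (\<Sum>m\<le>k. of_nat (k choose m) * (-2)^(k-m) * Mpow n (Suc m) i j)"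
  proof -
    have "(\<Sum>l\<in>states n. (\<Sum>m\<le>k. of_nat (k choose m) * (-2)^(k-m) * Mpow n m i l) * Mm n l j)
       = (\<Sum>l\<in>states n. \<Sum>m\<le>k. of_nat (k choose m) * (-2)^(k-m) * (Mpow n m i l * Mm n l j))"
      by (simp add: sum_distrib_right mult.assoc)
    also have "\<dots> = (\<Sum>m\<le>k. \<Sum>l\<in>states n. of_nat (k choose m) * (-2)^(k-m) * (Mpow n m i l * Mm n l j))"
      by (rule sum.swap)
    also have "\<dots> = (\<Sum>m\<le>k. of_nat (k choose m) * (-2)^(k-m) * Mpow n (Suc m) i j)"
      by (simp add: sum_distrib_left)
    finally show ?thesis .
  qed
  finally show ?case using Suc.IH[OF Suc.prems] pascal[of k "-2" "\<lambda>m. Mpow n m i j"] by simp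
qed

lemma semigroup_eq:
  assumes n: "n \<ge> 2" and j: "j \<in> states n"
  shows "trans_semigroup n t i j = (\<Sum>m. t^m / fact m * Mpow n m i j) * exp (-2*t)
     \<and> summable (\<lambda>m. t^m / fact m * Mpow n m i j)"
proof -
  define L where "L = 2 * (2*real n+1)"
  define a where "a = (\<lambda>m. t^m / fact m * Mpow n m i j)"
  define b where "b = (\<lambda>p. (-2*t)^p / fact p)"
  have sa: "summable (\<lambda>m. norm (a m))"
  proof (rule summable_comparison_test'[where N=0])
    show "summable (\<lambda>m. inverse (fact m) * (\<bar>t\<bar>*L)^m)" by (rule summable_exp)
  next
    fix m :: nat
    have "\<bar>a m\<bar> = \<bar>t\<bar>^m / fact m * Mpow n m i j"
      unfolding a_def using Mpow_nonneg[OF n] by (simp add: abs_mult power_abs)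
    also have "\<dots> \<le> \<bar>t\<bar>^m / fact m * L^m"
      unfolding L_def by (intro mult_left_mono Mpow_le n) auto
    also have "\<dots> = inverse (fact m) * (\<bar>t\<bar>*L)^m" by (simp add: power_mult_distrib field_simps)
    finally show "norm (norm (a m)) \<le> inverse (fact m) * (\<bar>t\<bar>*L)^m" by simp
  qed
  have sb: "summable (\<lambda>p. norm (b p))"
  proof -
    have "summable (\<lambda>p. inverse (fact p) * (\<bar>-2*t\<bar>)^p)" by (rule summable_exp)
    moreover have "(\<lambda>p. norm (b p)) = (\<lambda>p. inverse (fact p) * (\<bar>-2*t\<bar>)^p)"
      unfolding b_def by (auto simp: power_abs field_simps)
    ultimately show ?thesis by simp
  qed
  have C: "(\<lambda>k. \<Sum>m\<le>k. a m * b (k - m)) sums ((\<Sum>k. a k) * (\<Sum>k. b k))"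
    by (rule Cauchy_product_sums[OF sa sb])
  have B: "(\<Sum>k. b k) = exp (-2*t)"
  proof -
    have "(\<lambda>p. (-2*t)^p /\<^sub>R fact p) sums exp (-2*t)" by (rule exp_converges)
    then have "b sums exp (-2*t)" unfolding b_def by (simp add: divide_inverse mult.commute)
    then show ?thesis by (simp add: sums_iff)
  qed
  have T: "(\<lambda>k. \<Sum>m\<le>k. a m * b (k - m)) = (\<lambda>k. t^k / fact k * gen_pow n k i j)"
  proof
    fix k
    have "t^k / fact k * gen_pow n k i j = (\<Sum>m\<le>k. t^k / fact k * (of_nat (k choose m) * (-2)^(k-m) * Mpow n m i j))"
      unfolding gen_pow_binom[OF j] by (simp add: sum_distrib_left)
    also have "\<dots> = (\<Sum>m\<le>k. a m * b (k - m))"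
    proof (intro sum.cong refl)
      fix m assume "m \<in> {..k}"
      then have mk: "m \<le> k" by simp
      have tk: "t^k = t^m * t^(k-m)" using mk by (simp add: power_add[symmetric])
      have ch: "(of_nat (k choose m) :: real) = fact k / (fact m * fact (k - m))" by (rule binomial_fact[OF mk])
      show "t^k / fact k * (of_nat (k choose m) * (-2)^(k-m) * Mpow n m i j) = a m * b (k - m)"
      proof -
        have pw: "(-2*t)^(k-m) = (-2)^(k-m) * t^(k-m)" by (simp add: power_mult_distrib[symmetric])
        show ?thesis unfolding a_def b_def tk ch pw by (simp add: field_simps)
      qed
    qed
    finally show "(\<Sum>m\<le>k. a m * b (k - m)) = t^k / fact k * gen_pow n k i j" by simp
  qed
  have "trans_semigroup n t i j = (\<Sum>k. a k) * (\<Sum>k. b k)"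
    using C unfolding T trans_semigroup_def by (simp add: sums_iff)
  then show ?thesis using B summable_norm_cancel[OF sa] unfolding a_def by simp
qed

lemma semigroup_lb:
  assumes n: "n \<ge> 2" and j: "j \<in> states n" and t: "t \<ge> 0"
  shows "trans_semigroup n t i j \<ge> exp (-2*t) * (t^K / fact K * Mpow n K i j)"
proof -
  note E = semigroup_eq[OF n j, of t i]
  have "sum (\<lambda>m. t^m / fact m * Mpow n m i j) {K} \<le> (\<Sum>m. t^m / fact m * Mpow n m i j)"
    by (rule sum_le_suminf) (use E t Mpow_nonneg[OF n] in auto)
  then have "t^K / fact K * Mpow n K i j \<le> (\<Sum>m. t^m / fact m * Mpow n m i j)" by simp
  then have "exp (-2*t) * (t^K / fact K * Mpow n K i j) \<le> exp (-2*t) * (\<Sum>m. t^m / fact m * Mpow n m i j)"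
    by (rule mult_left_mono) simp
  moreover have "trans_semigroup n t i j = exp (-2*t) * (\<Sum>m. t^m / fact m * Mpow n m i j)"
    using conjunct1[OF E] by (metis mult.commute)
  ultimately show ?thesis by simp
qed

definition wt :: "nat \<Rightarrow> nat \<Rightarrow> real" where
  "wt n i = (if i \<le> n then 1 else 1/real n) * (2^(n^2))^i"

lemma wt_pos: "n \<ge> 2 \<Longrightarrow> wt n i > 0"
  unfolding wt_def by auto

lemma wt_Suc: "wt n (Suc i) = wt n i * (if i = n then 1/real n else 1) * 2^(n^2)"
  unfolding wt_def by auto

lemma pow3: "(2::real)^(n^3) = (2^(n^2))^n"
  by (simp add: power_mult[symmetric] power2_eq_square power3_eq_cube)

lemma wt_db: "n \<ge> 2 \<Longrightarrow> wt n i * rate n i j = wt n j * rate n j i"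
proof -
  assume n: "n \<ge> 2"
  define r where "r = (2::real)^(n^2)"
  have r: "r > 0" unfolding r_def by simp
  have fwd: "wt n i * rate n i (Suc i) = wt n (Suc i) * rate n (Suc i) i" for i
  proof (cases "i < 2*n")
    case True
    show ?thesis unfolding rate_fwd[OF True] rate_bwd[OF True n] wt_Suc r_def[symmetric]
      using r by (simp add: field_simps)
  next
    case False
    then have "Suc i \<notin> states n" by (simp add: states_def)
    then show ?thesis using rate_out1[of "Suc i" n i] rate_out2[of "Suc i" n i] by simp
  qed
  have nn: "wt n n * rate n n (2*n) = wt n (2*n) * rate n (2*n) n"
  proof -
    have A: "wt n n = r^n" unfolding wt_def r_def by simp
    have B: "wt n (2*n) = r^n * r^n / real n" unfolding wt_def r_def using n
      by (simp add: power_add[symmetric] mult_2)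
    have C: "rate n (2*n) n = (real n - 1) / r^n"
      unfolding rate_2nn[OF n] pow3 r_def by (simp add: divide_inverse)
    show ?thesis unfolding rate_n2n[OF n] A B C using r n by (simp add: field_simps)
  qed
  show ?thesis
  proof (cases "j = Suc i")
    case True then show ?thesis using fwd[of i] by simp
  next
    case F1: False
    show ?thesis
    proof (cases "i = Suc j")
      case True then show ?thesis using fwd[of j] by simp
    next
      case F2: False
      show ?thesis
      proof (cases "i = n \<and> j = 2*n")
        case True then show ?thesis using nn by simp
      next
        case F3: False
        show ?thesis
        proof (cases "i = 2*n \<and> j = n")
          case True then show ?thesis using nn by simp
        next
          case False
          then show ?thesis using rate_other[of j i n] rate_other[of i j n] F1 F2 F3 by auto
        qed
      qed
    qed
  qed
qed

definition SD :: "nat \<Rightarrow> (nat \<Rightarrow> real) \<Rightarrow> bool" where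
  "SD n p \<longleftrightarrow> (\<forall>i. i \<notin> states n \<longrightarrow> p i = 0)
                      \<and> (\<forall>i\<in>states n. p i \<ge> 0)
                      \<and> (\<Sum>i\<in>states n. p i) = 1
                      \<and> (\<forall>j\<in>states n. (\<Sum>i\<in>states n. p i * gen n i j) = 0)
                      \<and> (\<forall>i\<in>states n. \<forall>j\<in>states n. p i * rate n i j = p j * rate n j i)"

lemma SD_wt: "n \<ge> 2 \<Longrightarrow> SD n p \<Longrightarrow> i \<le> 2*n \<Longrightarrow> p i = p 0 * wt n i"
proof (induction i)
  case 0
  then show ?case by (simp add: wt_def)
next
  case (Suc i)
  have lt: "i < 2*n" using Suc.prems by simp
  have IH: "p i = p 0 * wt n i" using Suc lt by simp
  have db: "p i * rate n i (Suc i) = p (Suc i) * rate n (Suc i) i"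
    using Suc.prems(2) lt unfolding SD_def states_def by auto
  have r: "(2::real)^(n^2) > 0" by simp
  from db have "p (Suc i) = p i * (if i = n then 1/real n else 1) * 2^(n^2)"
    unfolding rate_fwd[OF lt] rate_bwd[OF lt Suc.prems(1)] using r by (simp add: field_simps)
  then show ?case unfolding wt_Suc IH by simp
qed

lemma stationary_from_db:
  assumes db: "\<forall>i\<in>states n. \<forall>j\<in>states n. p i * rate n i j = p j * rate n j i" and j: "j \<in> states n"
  shows "(\<Sum>i\<in>states n. p i * gen n i j) = 0"
proof -
  have fin: "finite (states n)" by (simp add: states_def)
  have "(\<Sum>i\<in>states n. p i * gen n i j) = p j * gen n j j + (\<Sum>i\<in>states n - {j}. p i * gen n i j)"
    by (rule sum.remove[OF fin j])
  also have "(\<Sum>i\<in>states n - {j}. p i * gen n i j) = (\<Sum>i\<in>states n - {j}. p j * rate n j i)"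
    using db j by (intro sum.cong refl) (auto simp: gen_def)
  also have "\<dots> = p j * (\<Sum>i\<in>states n - {j}. rate n j i)" by (simp add: sum_distrib_left)
  also have "p j * gen n j j = - (p j * (\<Sum>i\<in>states n - {j}. rate n j i))" by (simp add: gen_def)
  finally show ?thesis by simp
qed

lemma SD_unique: "n \<ge> 2 \<Longrightarrow> \<exists>!p. SD n p"
proof -
  assume n: "n \<ge> 2"
  define Z where "Z = (\<Sum>i\<in>states n. wt n i)"
  have fin: "finite (states n)" by (simp add: states_def)
  have Z: "Z > 0" unfolding Z_def by (rule sum_pos[OF fin]) (auto simp: states_def wt_pos[OF n])
  define q where "q = (\<lambda>i. if i \<in> states n then wt n i / Z else 0)"
  have dbq: "\<forall>i\<in>states n. \<forall>j\<in>states n. q i * rate n i j = q j * rate n j i"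
    unfolding q_def using wt_db[OF n] Z by (auto simp: field_simps)
  have "SD n q" unfolding SD_def
  proof (intro conjI)
    show "\<forall>i. i \<notin> states n \<longrightarrow> q i = 0" unfolding q_def by simp
    show "\<forall>i\<in>states n. 0 \<le> q i" unfolding q_def using Z wt_pos[OF n] by (simp add: less_imp_le)
    show "(\<Sum>i\<in>states n. q i) = 1" unfolding q_def using Z
      by (simp add: sum_divide_distrib[symmetric] Z_def)
    show "\<forall>j\<in>states n. (\<Sum>i\<in>states n. q i * gen n i j) = 0"
      using stationary_from_db[OF dbq] by blast
    show "\<forall>i\<in>states n. \<forall>j\<in>states n. q i * rate n i j = q j * rate n j i" by (rule dbq)
  qed
  moreover have "p = q" if p: "SD n p" for p
  proof
    fix i
    have "(\<Sum>i\<in>states n. p i) = 1" using p unfolding SD_def by blast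
    also have "(\<Sum>i\<in>states n. p i) = (\<Sum>i\<in>states n. p 0 * wt n i)"
      by (intro sum.cong refl SD_wt[OF n p]) (simp add: states_def)
    also have "\<dots> = p 0 * Z" unfolding Z_def by (simp add: sum_distrib_left)
    finally have p0: "p 0 = 1 / Z" using Z by (simp add: field_simps)
    show "p i = q i"
    proof (cases "i \<in> states n")
      case True
      then show ?thesis using SD_wt[OF n p, of i] p0 unfolding q_def by (simp add: states_def)
    next
      case False
      then show ?thesis using p unfolding q_def SD_def by simp
    qed
  qed
  ultimately show ?thesis by blast
qed

lemma stat_dist_SD: "n \<ge> 2 \<Longrightarrow> SD n (stat_dist n)"
proof -
  assume n: "n \<ge> 2"
  have "stat_dist n = (THE p. SD n p)" unfolding stat_dist_def SD_def by simp
  then show ?thesis using theI'[OF SD_unique[OF n]] by simp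
qed

lemma stat_dist_le: "n \<ge> 2 \<Longrightarrow> y \<le> 2*n \<Longrightarrow> stat_dist n y \<le> real n * inverse (2^(n^2)) ^ (2*n - y)"
proof -
  assume n: "n \<ge> 2" and y: "y \<le> 2*n"
  define p where "p = stat_dist n"
  define r where "r = (2::real)^(n^2)"
  have r: "r > 0" "r \<ge> 1" unfolding r_def by auto
  have p: "SD n p" unfolding p_def by (rule stat_dist_SD[OF n])
  have fin: "finite (states n)" by (simp add: states_def)
  have nonneg: "\<forall>i\<in>states n. p i \<ge> 0" using p unfolding SD_def by blast
  have "p (2*n) \<le> (\<Sum>i\<in>states n. p i)"
    by (rule member_le_sum) (use nonneg in \<open>auto simp: states_def fin\<close>)
  then have p2n: "p (2*n) \<le> 1" using p unfolding SD_def by simp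
  have w2n: "wt n (2*n) = r^y * r^(2*n-y) / real n" unfolding wt_def r_def using n y
    by (simp add: power_add[symmetric])
  have wy: "wt n y \<le> r^y" unfolding wt_def r_def using n by auto
  have p0: "p 0 \<ge> 0" using nonneg by (simp add: states_def)
  have "p 0 * wt n (2*n) \<le> 1" using p2n SD_wt[OF n p, of "2*n"] by simp
  then have p0b: "p 0 \<le> real n / (r^y * r^(2*n-y))" unfolding w2n using r n
    by (simp add: field_simps)
  have "p y = p 0 * wt n y" using SD_wt[OF n p y] .
  also have "\<dots> \<le> real n / (r^y * r^(2*n-y)) * r^y"
    by (rule mult_mono[OF p0b wy]) (use n r wt_pos[OF n, of y] in auto)
  also have "\<dots> = real n * inverse r ^ (2*n-y)" using r by (simp add: field_simps power_inverse)
  finally show ?thesis unfolding p_def r_def .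
qed

lemma nat_bound: "n \<ge> 18 \<Longrightarrow> n^2 * 46656^n \<le> (2::nat)^(n^2)"
proof -
  assume n: "n \<ge> 18"
  have "n \<le> 2^n" using less_exp[of n] by simp
  then have a: "n^2 \<le> (2^n)^2" by (rule power_mono) simp
  have b: "(46656::nat)^n \<le> (2^16)^n" by (rule power_mono) auto
  have "n^2 * 46656^n \<le> (2^n)^2 * (2^16)^n" using a b by (rule mult_mono) auto
  also have "\<dots> = (2::nat)^(18*n)" unfolding power_mult[symmetric] power_add[symmetric]
    by (rule arg_cong[where f="\<lambda>k. (2::nat)^k"]) simp
  also have "\<dots> \<le> 2^(n^2)" by (rule power_increasing) (use n in \<open>auto simp: power2_eq_square\<close>)
  finally show ?thesis .
qed

lemma numeric:
  assumes n: "n \<ge> 18" and t1: "real n / 2 \<le> t" and t2: "t \<le> 3 * real n"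
  shows "real n * real n * fact (2*n) * 4^n \<le> exp (-2*t) * t^(2*n) * 2^(n^2)"
proof -
  define A where "A = (real n / 2)^(2*n)"
  have A0: "A > 0" unfolding A_def using n by simp
  have f1: "fact (2*n) \<le> (real (2*n))^(2*n)" using fact_le_power[of "2*n", where 'a=real] by simp
  have f2: "(real (2*n))^(2*n) = 16^n * A"
  proof -
    have "(real (2*n))^(2*n) = (4 * (real n / 2))^(2*n)" by simp
    also have "\<dots> = 4^(2*n) * A" unfolding A_def by (rule power_mult_distrib)
    also have "(4::real)^(2*n) = 16^n" by (simp add: power_mult)
    finally show ?thesis .
  qed
  have tp: "A \<le> t^(2*n)" unfolding A_def by (rule power_mono[OF t1]) simp
  have ex: "exp (-2*t) \<ge> 1 / 729^n"
  proof -
    have "exp (6 * real n) = exp (real (6*n) * 1)" by simp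
    also have "\<dots> = exp 1 ^ (6*n)" by (rule exp_of_nat_mult)
    also have "\<dots> \<le> 3 ^ (6*n)" by (rule power_mono[OF exp_le]) simp
    also have "(3::real) ^ (6*n) = 729^n" by (simp add: power_mult)
    finally have e6: "exp (6 * real n) \<le> 729^n" .
    have "exp (-2*t) \<ge> exp (- (6 * real n))" using t2 by simp
    moreover have "exp (- (6 * real n)) = 1 / exp (6 * real n)" by (simp add: exp_minus')
    moreover have "1 / exp (6 * real n) \<ge> 1 / 729^n" using e6 by (intro divide_left_mono) auto
    ultimately show ?thesis by linarith
  qed
  have nb: "real n * real n * 64^n * 729^n \<le> 2^(n^2)"
  proof -
    have "real (n^2 * 46656^n) \<le> real ((2::nat)^(n^2))" using nat_bound[OF n] by (simp only: of_nat_le_iff)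
    moreover have "(46656::real)^n = 64^n * 729^n" by (simp add: power_mult_distrib[symmetric])
    ultimately show ?thesis by (simp add: power2_eq_square)
  qed
  have "real n * real n * fact (2*n) * 4^n \<le> real n * real n * (16^n * A) * 4^n"
    using f1 f2 by (intro mult_right_mono mult_left_mono) auto
  also have "\<dots> = (real n * real n * 64^n * 729^n) * (A / 729^n)"
    by (simp add: power_mult_distrib[symmetric] field_simps)
  also have "\<dots> \<le> 2^(n^2) * (A / 729^n)"
    using nb A0 by (intro mult_right_mono) auto
  also have "\<dots> = (1/729^n) * A * 2^(n^2)" by simp
  also have "\<dots> \<le> exp (-2*t) * t^(2*n) * 2^(n^2)"
    using ex tp A0 by (intro mult_right_mono mult_mono) auto
  finally show ?thesis .
qed

theorem lemma3p5:
  shows "\<exists>N. \<forall>n\<ge>N. n \<ge> 2 \<longrightarrow>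
           (\<forall>x\<in>states n - {2*n}. \<forall>y\<in>states n - {2*n}. \<forall>t::real.
              real n / 2 \<le> t \<and> t \<le> 3 * real n \<longrightarrow> trans_semigroup n t x y \<ge> stat_dist n y)"
proof (intro exI[of _ 18] allI impI ballI)
  fix n x y :: nat and t :: real
  assume n18: "n \<ge> 18" and n: "n \<ge> 2" and x: "x \<in> states n - {2*n}" and y: "y \<in> states n - {2*n}"
    and tt: "real n / 2 \<le> t \<and> t \<le> 3 * real n"
  have xl: "x < 2*n" and yl: "y < 2*n" using x y by (auto simp: states_def)
  have yS: "y \<in> states n" using y by simp
  have t0: "t \<ge> 0" using tt by (smt (verit) of_nat_0_le_iff divide_nonneg_nonneg)
  define e where "e = inverse ((2::real)^(n^2))"
  define E where "E = e^(2*n-1-y)"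
  define K where "K = exp (-2*t) * (t^(2*n) / fact (2*n))"
  have e0: "e > 0" unfolding e_def by simp
  have E0: "E \<ge> 0" unfolding E_def using e0 by simp
  have K0: "K \<ge> 0" unfolding K_def using t0 by simp
  have lb: "trans_semigroup n t x y \<ge> K * Mpow n (2*n) x y"
    using semigroup_lb[OF n yS t0, where i=x and K="2*n"] unfolding K_def by (simp add: mult.assoc)
  have path: "Mpow n (2*n) x y \<ge> (1/real n) * (1/4)^n * E"
    using Mpow_path[OF n xl yl] unfolding E_def e_def .
  have sd: "stat_dist n y \<le> real n * e * E"
  proof -
    have "2*n - y = Suc (2*n-1-y)" using yl by simp
    then have "e^(2*n-y) = e * E" unfolding E_def by simp
    then show ?thesis using stat_dist_le[OF n, of y] yl unfolding e_def[symmetric] by (simp add: mult.assoc)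
  qed
  have num: "real n * real n * fact (2*n) * 4^n \<le> exp (-2*t) * t^(2*n) * 2^(n^2)"
    using numeric[OF n18] tt by auto
  have key: "real n * e \<le> K * ((1/real n) * (1/4)^n)"
  proof -
    have r: "(2::real)^(n^2) > 0" by simp
    have nf: "real n * fact (2*n) * 4^n > 0" using n by simp
    have "real n * e = real n / 2^(n^2)" unfolding e_def by (simp add: divide_inverse)
    also have "\<dots> \<le> (exp (-2*t) * t^(2*n)) / (real n * fact (2*n) * 4^n)"
      using num r nf by (simp add: divide_le_eq le_divide_eq field_simps)
    also have "\<dots> = K * ((1/real n) * (1/4)^n)" unfolding K_def by (simp add: field_simps power_one_over)
    finally show ?thesis .
  qed
  have "stat_dist n y \<le> real n * e * E" by (rule sd)
  also have "\<dots> \<le> K * ((1/real n) * (1/4)^n) * E" by (rule mult_right_mono[OF key E0])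
  also have "\<dots> = K * ((1/real n) * (1/4)^n * E)" by (simp add: mult.assoc)
  also have "\<dots> \<le> K * Mpow n (2*n) x y" by (rule mult_left_mono[OF path K0])
  also have "\<dots> \<le> trans_semigroup n t x y" by (rule lb)
  finally show "trans_semigroup n t x y \<ge> stat_dist n y" .
qed

end
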